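(* In the setting below, fix $(s,a)\in\mathcal{K}$ and a policy $\pi$. Let $u^\pi=\gamma(\widehat{P}_\mathcal{K}(\cdot|s,a)-P(\cdot|s,a))\widehat{V}^\pi$ and $u^*=\gamma(\widehat{P}_\mathcal{K}(\cdot|s,a)-P(\cdot|s,a))\widehat{V}^*$. Then $$\widehat{Q}^\pi=\widetilde{Q}^\pi_{u^\pi},\quad \widehat{Q}^*=\widetilde{Q}^{\widehat{\pi}^*}_{u^*}=\widetilde{Q}^*_{u^*},\quad -\tfrac{1}{1-\gamma}\le u^\pi\le\tfrac{1}{1-\gamma},\quad -\tfrac{1}{1-\gamma}\le u^*\le\tfrac{1}{1-\gamma}.$$
   Context: $M=(\mathcal{S},\mathcal{A},P,r,\gamma)$ is a discounted MDP (finite $\mathcal{S},\mathcal{A}$, $r\in[0,1]$, $\gamma\in(0,1)$) with linear representation $P(s'|s,a)=\sum_k\phi_k(s,a)\psi_k(s')$ satisfying the anchor-state assumption: anchors $\mathcal{K}=\{(s_k,a_k)\}_{k=1}^K$, $\lambda_k^{s,a}\ge0$, $\sum_k\lambda_k^{s,a}=1$, $\phi(s,a)=\sum_k\lambda_k^{s,a}\phi(s_k,a_k)$. $\widehat{P}_\mathcal{K}(\cdot|s_k,a_k)$ is the empirical distribution of $N$ samples from $P(\cdot|s_k,a_k)$; $\widehat{P}(s'|s'',a'')=\sum_k\lambda_k^{s'',a''}\widehat{P}_\mathcal{K}(s'|s_k,a_k)$; $\widehat{M}=(\mathcal{S},\mathcal{A},\widehat{P},r,\gamma)$ with Q-functions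 $\widehat{Q}^\pi$, value functions $\widehat{V}^\pi$, optimal policy $\widehat{\pi}^*$, $\widehat{V}^*=\widehat{V}^{\widehat{\pi}^*}$, $\widehat{Q}^*=\widehat{Q}^{\widehat{\pi}^*}$. Auxiliary MDP: for $(s,a)=(s_j,a_j)\in\mathcal{K}$ and $u\in\mathbb{R}$, $\widetilde{M}_{s,a,u}=(\mathcal{S},\mathcal{A},\widetilde{P},r+u\Lambda^{s,a},\gamma)$ where $\widetilde{P}_\mathcal{K}(\cdot|s_k,a_k)=\widehat{P}_\mathcal{K}(\cdot|s_k,a_k)$ for $k\ne j$ and $\widetilde{P}_\mathcal{K}(\cdot|s_j,a_j)=P(\cdot|s,a)$, $\widetilde{P}(s'|s'',a'')=\sum_k\lambda_k^{s'',a''}\widetilde{P}_\mathcal{K}(s'|s_k,a_k)$, and $\Lambda^{s,a}\in\mathbb{R}^{\mathcal{S}\times\mathcal{A}}$ is the vector $(s'',a'')\mapsto\lambda_j^{s'',a''}$. $\widetilde{Q}^\pi_u$, $\widetilde{Q}^*_u$ denote the Q-function of $\pi$ and the optimal Q-function in $\widetilde{M}_{s,a,u}$. Here $\widehat{P}_\mathcal{K}(\cdot|s,a)V$ denotes $\sum_{s'}\widehat{P}_\mathcal{K}(s'|s,a)V(s')$. *)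

theory Defs
  imports "HOL-Analysis.Analysis"
begin

(* Finite discounted MDPs over finite types 's (states) and 'a (actions).
   A transition kernel is  P :: ('s \<times> 'a) \<Rightarrow> 's \<Rightarrow> real,  P (s,a) s' = P(s'|s,a).
   Policies are stationary (possibly randomized): pol s a = pol(a|s). *)

definition is_policy :: "('s::finite \<Rightarrow> 'a::finite \<Rightarrow> real) \<Rightarrow> bool" where
  "is_policy pol \<longleftrightarrow> (\<forall>s a. 0 \<le> pol s a) \<and> (\<forall>s. (\<Sum>a\<in>UNIV. pol s a) = 1)"

definition stoch_kernel :: "('s::finite \<times> 'a::finite \<Rightarrow> 's \<Rightarrow> real) \<Rightarrow> bool" where
  "stoch_kernel P \<longleftrightarrow> (\<forall>sa s'. 0 \<le> P sa s') \<and> (\<forall>sa. (\<Sum>s'\<in>UNIV. P sa s') = 1)"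

definition Vof :: "('s::finite \<Rightarrow> 'a::finite \<Rightarrow> real) \<Rightarrow> ('s \<times> 'a \<Rightarrow> real) \<Rightarrow> 's \<Rightarrow> real" where
  "Vof pol Q s = (\<Sum>a\<in>UNIV. pol s a * Q (s, a))"

definition step_op :: "('s::finite \<times> 'a::finite \<Rightarrow> 's \<Rightarrow> real) \<Rightarrow> real \<Rightarrow> ('s \<Rightarrow> 'a \<Rightarrow> real)
    \<Rightarrow> ('s \<times> 'a \<Rightarrow> real) \<Rightarrow> ('s \<times> 'a \<Rightarrow> real)" where
  "step_op P \<gamma> pol Q = (\<lambda>sa. \<gamma> * (\<Sum>s'\<in>UNIV. P sa s' * Vof pol Q s'))"

(* Q-function of pol in MDP (S,A,P,r,gamma): expected discounted return
   Q^pol = sum_t (gamma P^pol)^t r *)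
definition Qfun :: "('s::finite \<times> 'a::finite \<Rightarrow> 's \<Rightarrow> real) \<Rightarrow> ('s \<times> 'a \<Rightarrow> real) \<Rightarrow> real
    \<Rightarrow> ('s \<Rightarrow> 'a \<Rightarrow> real) \<Rightarrow> ('s \<times> 'a \<Rightarrow> real)" where
  "Qfun P r \<gamma> pol = (\<lambda>sa. (\<Sum>t. ((step_op P \<gamma> pol ^^ t) r) sa))"

definition Vfun :: "('s::finite \<times> 'a::finite \<Rightarrow> 's \<Rightarrow> real) \<Rightarrow> ('s \<times> 'a \<Rightarrow> real) \<Rightarrow> real
    \<Rightarrow> ('s \<Rightarrow> 'a \<Rightarrow> real) \<Rightarrow> 's \<Rightarrow> real" where
  "Vfun P r \<gamma> pol = Vof pol (Qfun P r \<gamma> pol)"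

definition optimal_policy :: "('s::finite \<times> 'a::finite \<Rightarrow> 's \<Rightarrow> real) \<Rightarrow> ('s \<times> 'a \<Rightarrow> real) \<Rightarrow> real
    \<Rightarrow> ('s \<Rightarrow> 'a \<Rightarrow> real) \<Rightarrow> bool" where
  "optimal_policy P r \<gamma> pol \<longleftrightarrow> is_policy pol \<and>
     (\<forall>pol'. is_policy pol' \<longrightarrow> (\<forall>s. Vfun P r \<gamma> pol' s \<le> Vfun P r \<gamma> pol s))"

definition Qopt :: "('s::finite \<times> 'a::finite \<Rightarrow> 's \<Rightarrow> real) \<Rightarrow> ('s \<times> 'a \<Rightarrow> real) \<Rightarrow> real
    \<Rightarrow> ('s \<times> 'a \<Rightarrow> real)" where
  "Qopt P r \<gamma> = (\<lambda>sa. (SUP pol\<in>{pol. is_policy pol}. Qfun P r \<gamma> pol sa))"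

(* empirical distribution of the N samples  smp k 0, ..., smp k (N-1)  drawn at anchor k *)
definition emp_dist :: "nat \<Rightarrow> (nat \<Rightarrow> nat \<Rightarrow> 's) \<Rightarrow> nat \<Rightarrow> 's \<Rightarrow> real" where
  "emp_dist N smp k s' = real (card {i\<in>{..<N}. smp k i = s'}) / real N"

definition interp_kernel :: "nat \<Rightarrow> ('s \<times> 'a \<Rightarrow> nat \<Rightarrow> real) \<Rightarrow> (nat \<Rightarrow> 's \<Rightarrow> real)
    \<Rightarrow> ('s \<times> 'a \<Rightarrow> 's \<Rightarrow> real)" where
  "interp_kernel K lam PK = (\<lambda>sa s'. (\<Sum>k<K. lam sa k * PK k s'))"

end

theory Submission
  imports Defs
begin



lemma Vof_diff: "Vof pol (\<lambda>x. Q x - Q' x) s = Vof pol Q s - Vof pol Q' s"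
  by (simp add: Vof_def right_diff_distrib sum_subtractf)

lemma Vof_mono: "is_policy pol \<Longrightarrow> (\<And>x. Q x \<le> Q' x) \<Longrightarrow> Vof pol Q s \<le> Vof pol Q' s"
  unfolding Vof_def is_policy_def by (intro sum_mono mult_left_mono) auto

lemma Vof_ub: assumes "is_policy pol" "\<And>x. Q x \<le> M" shows "Vof pol Q s \<le> M"
proof -
  have "Vof pol Q s \<le> (\<Sum>a\<in>UNIV. pol s a * M)"
    using assms unfolding Vof_def is_policy_def by (intro sum_mono mult_left_mono) auto
  also have "\<dots> = M" using assms(1) unfolding is_policy_def by (simp add: sum_distrib_right[symmetric])
  finally show ?thesis .
qed

lemma Vof_lb: assumes "is_policy pol" "\<And>x. M \<le> Q x" shows "M \<le> Vof pol Q s"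
proof -
  have "(\<Sum>a\<in>UNIV. pol s a * M) \<le> Vof pol Q s"
    using assms unfolding Vof_def is_policy_def by (intro sum_mono mult_left_mono) auto
  moreover have "(\<Sum>a\<in>UNIV. pol s a * M) = M" using assms(1) unfolding is_policy_def by (simp add: sum_distrib_right[symmetric])
  ultimately show ?thesis by simp
qed

lemma stoch_nn: "stoch_kernel P \<Longrightarrow> 0 \<le> P sa s'"
  unfolding stoch_kernel_def by blast

lemma stoch_sum: "stoch_kernel P \<Longrightarrow> (\<Sum>s'\<in>UNIV. P sa s') = 1"
  unfolding stoch_kernel_def by blast

lemma ker_ub: assumes "stoch_kernel P" "\<And>x. V x \<le> M" shows "(\<Sum>s'\<in>UNIV. P sa s' * V s') \<le> M"
proof -
  have "(\<Sum>s'\<in>UNIV. P sa s' * V s') \<le> (\<Sum>s'\<in>UNIV. P sa s' * M)"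
    by (intro sum_mono mult_left_mono assms(2) stoch_nn[OF assms(1)])
  also have "\<dots> = M" using stoch_sum[OF assms(1)] by (simp add: sum_distrib_right[symmetric])
  finally show ?thesis .
qed

lemma ker_lb: assumes "stoch_kernel P" "\<And>x. M \<le> V x" shows "M \<le> (\<Sum>s'\<in>UNIV. P sa s' * V s')"
proof -
  have "(\<Sum>s'\<in>UNIV. P sa s' * M) \<le> (\<Sum>s'\<in>UNIV. P sa s' * V s')"
    by (intro sum_mono mult_left_mono assms(2) stoch_nn[OF assms(1)])
  moreover have "(\<Sum>s'\<in>UNIV. P sa s' * M) = M" using stoch_sum[OF assms(1)] by (simp add: sum_distrib_right[symmetric])
  ultimately show ?thesis by simp
qed

lemma ker_mono: assumes "stoch_kernel P" "\<And>x. V x \<le> V' x" shows "(\<Sum>s'\<in>UNIV. P sa s' * V s') \<le> (\<Sum>s'\<in>UNIV. P sa s' * V' s')"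
  by (intro sum_mono mult_left_mono assms(2) stoch_nn[OF assms(1)])

lemma step_diff: "step_op P \<gamma> pol (\<lambda>x. Q x - Q' x) sa = step_op P \<gamma> pol Q sa - step_op P \<gamma> pol Q' sa"
  by (simp add: step_op_def Vof_diff right_diff_distrib sum_subtractf)

lemma step_ub: "stoch_kernel P \<Longrightarrow> is_policy pol \<Longrightarrow> 0 \<le> \<gamma> \<Longrightarrow> (\<And>x. D x \<le> M) \<Longrightarrow> step_op P \<gamma> pol D sa \<le> \<gamma> * M"
  unfolding step_op_def by (intro mult_left_mono ker_ub Vof_ub) auto

lemma step_lb: "stoch_kernel P \<Longrightarrow> is_policy pol \<Longrightarrow> 0 \<le> \<gamma> \<Longrightarrow> (\<And>x. M \<le> D x) \<Longrightarrow> \<gamma> * M \<le> step_op P \<gamma> pol D sa"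
  unfolding step_op_def by (intro mult_left_mono ker_lb Vof_lb) auto

lemma cmp:
  fixes P :: "'s::finite \<times> 'a::finite \<Rightarrow> 's \<Rightarrow> real"
  assumes P: "stoch_kernel P" and pol: "is_policy pol" and g: "0 \<le> \<gamma>" "\<gamma> < 1"
    and Q: "\<And>x. Q x \<le> r x + step_op P \<gamma> pol Q x"
    and X: "\<And>x. r x + step_op P \<gamma> pol X x \<le> X x"
  shows "Q x \<le> X x"
proof -
  define D where "D = (\<lambda>x. Q x - X x)"
  have D: "D y \<le> step_op P \<gamma> pol D y" for y
    using Q[of y] X[of y] unfolding D_def step_diff by simp
  define M where "M = Max (range D)"
  have DM: "D y \<le> M" for y unfolding M_def by simp
  have Mr: "M \<in> range D" unfolding M_def by (intro Max_in) auto
  have "M \<le> 0"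
  proof (rule ccontr)
    assume "\<not> M \<le> 0"
    have "D y \<le> \<gamma> * M" for y using D[of y] step_ub[OF P pol g(1), of D M y] DM by force
    with Mr have "M \<le> \<gamma> * M" by auto
    with \<open>\<not> M \<le> 0\<close> g show False by (simp add: mult_le_cancel_right1)
  qed
  thus ?thesis using DM[of x] unfolding D_def by simp
qed

lemma iter_bound:
  fixes P :: "'s::finite \<times> 'a::finite \<Rightarrow> 's \<Rightarrow> real"
  assumes P: "stoch_kernel P" and pol: "is_policy pol" and g: "0 \<le> \<gamma>"
  shows "\<bar>(step_op P \<gamma> pol ^^ t) r x\<bar> \<le> \<gamma> ^ t * Max (range (\<lambda>y. \<bar>r y\<bar>))"
proof (induction t arbitrary: x)
  case 0
  then show ?case by simp
next
  case (Suc t)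
  let ?M = "\<gamma> ^ t * Max (range (\<lambda>y. \<bar>r y\<bar>))"
  have "step_op P \<gamma> pol ((step_op P \<gamma> pol ^^ t) r) x \<le> \<gamma> * ?M"
    using Suc by (intro step_ub[OF P pol g]) (simp add: abs_le_iff)
  moreover have "\<gamma> * (- ?M) \<le> step_op P \<gamma> pol ((step_op P \<gamma> pol ^^ t) r) x"
    using Suc by (intro step_lb[OF P pol g]) (metis abs_le_D2 minus_le_iff)
  ultimately show ?case by (simp add: abs_le_iff)
qed

lemma Qfun_fix:
  fixes P :: "'s::finite \<times> 'a::finite \<Rightarrow> 's \<Rightarrow> real"
  assumes P: "stoch_kernel P" and pol: "is_policy pol" and g: "0 \<le> \<gamma>" "\<gamma> < 1"
  shows "Qfun P r \<gamma> pol x = r x + step_op P \<gamma> pol (Qfun P r \<gamma> pol) x"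
proof -
  define f where "f = (\<lambda>t. (step_op P \<gamma> pol ^^ t) r)"
  have sm: "(\<lambda>t. f t y) sums Qfun P r \<gamma> pol y" for y
  proof -
    have "summable (\<lambda>t. f t y)"
    proof (rule summable_comparison_test)
      show "\<exists>N. \<forall>n\<ge>N. norm (f n y) \<le> \<gamma> ^ n * Max (range (\<lambda>y. \<bar>r y\<bar>))"
        unfolding f_def using iter_bound[OF P pol g(1)] by auto
      show "summable (\<lambda>n. \<gamma> ^ n * Max (range (\<lambda>y. \<bar>r y\<bar>)))"
        using g by (intro summable_mult2 summable_geometric) auto
    qed
    thus ?thesis unfolding Qfun_def f_def by (simp add: summable_sums)
  qed
  have "(\<lambda>t. step_op P \<gamma> pol (f t) x) sums step_op P \<gamma> pol (Qfun P r \<gamma> pol) x"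
    unfolding step_op_def Vof_def
    by (intro sums_mult sums_sum sm)
  moreover have "step_op P \<gamma> pol (f t) x = f (Suc t) x" for t
    unfolding f_def by simp
  ultimately have "(\<lambda>t. f (Suc t) x) sums step_op P \<gamma> pol (Qfun P r \<gamma> pol) x" by simp
  hence "(\<lambda>t. f t x) sums (step_op P \<gamma> pol (Qfun P r \<gamma> pol) x + f 0 x)" using sums_Suc_iff[where f="\<lambda>t. f t x"] by simp
  with sm[of x] have "Qfun P r \<gamma> pol x = step_op P \<gamma> pol (Qfun P r \<gamma> pol) x + f 0 x"
    using sums_unique2 by blast
  thus ?thesis unfolding f_def by simp
qed



lemma step_shift:
  assumes rel: "\<And>sa s'. Ph sa s' = Pt sa s' + L sa * D s'"
  shows "step_op Ph \<gamma> pol Q sa = step_op Pt \<gamma> pol Q sa + L sa * (\<gamma> * (\<Sum>s'\<in>UNIV. D s' * Vof pol Q s'))"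
  unfolding step_op_def rel by (simp add: distrib_right sum.distrib sum_distrib_left algebra_simps)

lemma shift:
  fixes Ph :: "'s::finite \<times> 'a::finite \<Rightarrow> 's \<Rightarrow> real"
  assumes Phs: "stoch_kernel Ph" and Pts: "stoch_kernel Pt" and pol: "is_policy pol"
    and g: "0 \<le> \<gamma>" "\<gamma> < 1"
    and rel: "\<And>sa s'. Ph sa s' = Pt sa s' + L sa * D s'"
    and u_def: "u = \<gamma> * (\<Sum>s'\<in>UNIV. D s' * Vfun Ph r \<gamma> pol s')"
  shows "Qfun Ph r \<gamma> pol x = r x + u * L x + step_op Pt \<gamma> pol (Qfun Ph r \<gamma> pol) x"
    and "Qfun Ph r \<gamma> pol = Qfun Pt (\<lambda>sa. r sa + u * L sa) \<gamma> pol"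
proof -
  have fx: "Qfun Ph r \<gamma> pol x = r x + u * L x + step_op Pt \<gamma> pol (Qfun Ph r \<gamma> pol) x" for x
    using Qfun_fix[OF Phs pol g, of r x] step_shift[OF rel, where \<gamma>=\<gamma> and pol=pol and Q="Qfun Ph r \<gamma> pol" and sa=x]
    unfolding u_def Vfun_def by (simp add: algebra_simps)
  then show "Qfun Ph r \<gamma> pol x = r x + u * L x + step_op Pt \<gamma> pol (Qfun Ph r \<gamma> pol) x" .
  let ?X = "Qfun Pt (\<lambda>sa. r sa + u * L sa) \<gamma> pol"
  have X: "?X x = (r x + u * L x) + step_op Pt \<gamma> pol ?X x" for x
    using Qfun_fix[OF Pts pol g] by simp
  show "Qfun Ph r \<gamma> pol = ?X"
  proof
    fix x
    have "Qfun Ph r \<gamma> pol x \<le> ?X x"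
      by (rule cmp[OF Pts pol g, where r="\<lambda>sa. r sa + u * L sa"])
        (metis fx X order_refl)+
    moreover have "?X x \<le> Qfun Ph r \<gamma> pol x"
      by (rule cmp[OF Pts pol g, where r="\<lambda>sa. r sa + u * L sa"])
        (metis fx X order_refl)+
    ultimately show "Qfun Ph r \<gamma> pol x = ?X x" by simp
  qed
qed

lemma interp_stoch:
  assumes nn: "\<And>k s'. k < K \<Longrightarrow> 0 \<le> Q k s'" and sm: "\<And>k. k < K \<Longrightarrow> (\<Sum>s'\<in>UNIV. Q k s') = (1::real)"
    and lam_nonneg: "\<forall>sa k. k < K \<longrightarrow> 0 \<le> lam sa k"
    and lam_sum: "\<forall>sa. (\<Sum>k<K. lam sa k) = 1"
  shows "stoch_kernel (interp_kernel K lam (Q :: nat \<Rightarrow> 's::finite \<Rightarrow> real) :: 's \<times> 'a::finite \<Rightarrow> 's \<Rightarrow> real)"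
  unfolding stoch_kernel_def
proof (intro conjI allI)
  fix sa :: "'s \<times> 'a" and s'
  show "0 \<le> interp_kernel K lam Q sa s'"
    unfolding interp_kernel_def by (intro sum_nonneg mult_nonneg_nonneg) (use nn lam_nonneg in blast)+
next
  fix sa :: "'s \<times> 'a"
  have "(\<Sum>s'\<in>UNIV. interp_kernel K lam Q sa s') = (\<Sum>k<K. lam sa k * (\<Sum>s'\<in>UNIV. Q k s'))"
    unfolding interp_kernel_def by (simp add: sum.swap[of _ UNIV] sum_distrib_left)
  also have "\<dots> = (\<Sum>k<K. lam sa k)" using sm by simp
  finally show "(\<Sum>s'\<in>UNIV. interp_kernel K lam Q sa s') = 1" using lam_sum by simp
qed

lemma emp_stoch:
  assumes "0 < N"
  shows "0 \<le> emp_dist N smp k s'" and "(\<Sum>s'\<in>UNIV. emp_dist N smp k (s'::'s::finite)) = 1"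
proof -
  show "0 \<le> emp_dist N smp k s'" unfolding emp_dist_def by simp
  have c: "real (card {i\<in>{..<N}. smp k i = s'}) = (\<Sum>i<N. if smp k i = s' then 1 else 0)" for s'
    by (simp add: sum.If_cases Int_def conj_commute)
  have "(\<Sum>s'\<in>UNIV. real (card {i\<in>{..<N}. smp k i = s'})) = (\<Sum>i<N. \<Sum>s'\<in>UNIV. if smp k i = s' then 1 else 0)"
    unfolding c by (rule sum.swap)
  also have "\<dots> = real N" by simp
  finally show "(\<Sum>s'\<in>UNIV. emp_dist N smp k (s'::'s::finite)) = 1"
    unfolding emp_dist_def using assms by (simp add: sum_divide_distrib[symmetric])
qed

lemma Q_bounds:
  fixes P :: "'s::finite \<times> 'a::finite \<Rightarrow> 's \<Rightarrow> real"
  assumes P: "stoch_kernel P" and pol: "is_policy pol" and g: "0 \<le> \<gamma>" "\<gamma> < 1"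
    and r: "\<forall>sa. 0 \<le> r sa \<and> r sa \<le> 1"
  shows "0 \<le> Qfun P r \<gamma> pol x" "Qfun P r \<gamma> pol x \<le> 1 / (1 - \<gamma>)"
proof -
  have r0: "0 \<le> r y" "r y \<le> 1" for y using r by blast+
  have fx: "Qfun P r \<gamma> pol x = r x + step_op P \<gamma> pol (Qfun P r \<gamma> pol) x" for x
    using Qfun_fix[OF P pol g] .
  show "0 \<le> Qfun P r \<gamma> pol x"
  proof (rule cmp[OF P pol g, where Q="\<lambda>_. 0" and r=r])
    fix y
    show "0 \<le> r y + step_op P \<gamma> pol (\<lambda>_. 0) y" using r0 by (simp add: step_op_def Vof_def)
    show "r y + step_op P \<gamma> pol (Qfun P r \<gamma> pol) y \<le> Qfun P r \<gamma> pol y" by (metis fx order_refl)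
  qed
  let ?C = "1 / (1 - \<gamma>)"
  have C: "1 + \<gamma> * ?C = ?C" using g by (simp add: field_simps)
  show "Qfun P r \<gamma> pol x \<le> ?C"
  proof (rule cmp[OF P pol g, where X="\<lambda>_. ?C" and r=r])
    fix y
    show "Qfun P r \<gamma> pol y \<le> r y + step_op P \<gamma> pol (Qfun P r \<gamma> pol) y" by (metis fx order_refl)
    have "step_op P \<gamma> pol (\<lambda>_. ?C) y \<le> \<gamma> * ?C" by (rule step_ub[OF P pol g(1)]) simp
    then show "r y + step_op P \<gamma> pol (\<lambda>_. ?C) y \<le> ?C" using r0(2)[of y] C by linarith
  qed
qed

lemma u_bound:
  fixes V :: "'s::finite \<Rightarrow> real"
  assumes p: "\<And>s'. 0 \<le> p s'" "(\<Sum>s'\<in>UNIV. p s') = 1"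
    and q: "\<And>s'. 0 \<le> q s'" "(\<Sum>s'\<in>UNIV. q s') = 1"
    and V: "\<And>s'. 0 \<le> V s'" "\<And>s'. V s' \<le> C"
    and g: "0 < \<gamma>" "\<gamma> < 1" and C: "C = 1 / (1 - \<gamma>)"
  shows "- C \<le> \<gamma> * (\<Sum>s'\<in>UNIV. (p s' - q s') * V s')" "\<gamma> * (\<Sum>s'\<in>UNIV. (p s' - q s') * V s') \<le> C"
proof -
  have sp: "stoch_kernel (\<lambda>_::'s \<times> 's. p)" "stoch_kernel (\<lambda>_::'s \<times> 's. q)"
    unfolding stoch_kernel_def using p q by auto
  have A: "0 \<le> (\<Sum>s'\<in>UNIV. p s' * V s')" "(\<Sum>s'\<in>UNIV. p s' * V s') \<le> C"
    using ker_lb[OF sp(1), of 0 V] ker_ub[OF sp(1), of V C] V by auto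
  have B: "0 \<le> (\<Sum>s'\<in>UNIV. q s' * V s')" "(\<Sum>s'\<in>UNIV. q s' * V s') \<le> C"
    using ker_lb[OF sp(2), of 0 V] ker_ub[OF sp(2), of V C] V by auto
  have eq: "(\<Sum>s'\<in>UNIV. (p s' - q s') * V s') = (\<Sum>s'\<in>UNIV. p s' * V s') - (\<Sum>s'\<in>UNIV. q s' * V s')"
    by (simp add: left_diff_distrib sum_subtractf)
  define w where "w = (\<Sum>s'\<in>UNIV. (p s' - q s') * V s')"
  have w: "- C \<le> w" "w \<le> C" unfolding w_def eq using A B by auto
  have C0: "0 \<le> C" using A by linarith
  have "\<gamma> * w \<le> \<gamma> * C" using w g by (intro mult_left_mono) auto
  also have gC: "\<dots> \<le> C" using g C0 by (intro mult_left_le_one_le) auto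
  finally show "\<gamma> * (\<Sum>s'\<in>UNIV. (p s' - q s') * V s') \<le> C" unfolding w_def .
  have "\<gamma> * (- C) \<le> \<gamma> * w" using w g by (intro mult_left_mono) auto
  moreover have "- C \<le> \<gamma> * (- C)" using gC by simp
  ultimately show "- C \<le> \<gamma> * (\<Sum>s'\<in>UNIV. (p s' - q s') * V s')" unfolding w_def by linarith
qed

theorem lemma6:
  fixes P :: "'s::finite \<times> 'a::finite \<Rightarrow> 's \<Rightarrow> real"
    and r :: "'s \<times> 'a \<Rightarrow> real"
    and \<gamma> :: real
    and d :: nat and \<phi> :: "'s \<times> 'a \<Rightarrow> nat \<Rightarrow> real" and \<psi> :: "nat \<Rightarrow> 's \<Rightarrow> real"
    and K :: nat and anchor :: "nat \<Rightarrow> 's \<times> 'a" and lam :: "'s \<times> 'a \<Rightarrow> nat \<Rightarrow> real"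
    and N :: nat and smp :: "nat \<Rightarrow> nat \<Rightarrow> 's"
    and j :: nat and s :: 's and a :: 'a
    and pol pihat :: "'s \<Rightarrow> 'a \<Rightarrow> real"
  assumes P_stoch: "stoch_kernel P"
    and r_range: "\<forall>sa. 0 \<le> r sa \<and> r sa \<le> 1"
    and gamma: "0 < \<gamma>" "\<gamma> < 1"
    and linear: "\<forall>sa s'. P sa s' = (\<Sum>i<d. \<phi> sa i * \<psi> i s')"
    and lam_nonneg: "\<forall>sa k. k < K \<longrightarrow> 0 \<le> lam sa k"
    and lam_sum: "\<forall>sa. (\<Sum>k<K. lam sa k) = 1"
    and anchor_comb: "\<forall>sa i. i < d \<longrightarrow> \<phi> sa i = (\<Sum>k<K. lam sa k * \<phi> (anchor k) i)"
    and N_pos: "0 < N"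
    and j: "j < K" "anchor j = (s, a)"
    and pol: "is_policy pol"
    and pihat: "optimal_policy (interp_kernel K lam (emp_dist N smp)) r \<gamma> pihat"
  shows
   "(let PhatK = emp_dist N smp;
         Phat = interp_kernel K lam PhatK;
         Ptil = interp_kernel K lam (PhatK(j := P (s, a)));
         Lam = (\<lambda>sa. lam sa j);
         u_pol = \<gamma> * (\<Sum>s'\<in>UNIV. (PhatK j s' - P (s, a) s') * Vfun Phat r \<gamma> pol s');
         u_st = \<gamma> * (\<Sum>s'\<in>UNIV. (PhatK j s' - P (s, a) s') * Vfun Phat r \<gamma> pihat s');
         r_pol = (\<lambda>sa. r sa + u_pol * Lam sa);
         r_st = (\<lambda>sa. r sa + u_st * Lam sa)
     in Qfun Phat r \<gamma> pol = Qfun Ptil r_pol \<gamma> pol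
      \<and> Qfun Phat r \<gamma> pihat = Qfun Ptil r_st \<gamma> pihat
      \<and> Qfun Ptil r_st \<gamma> pihat = Qopt Ptil r_st \<gamma>
      \<and> - (1 / (1 - \<gamma>)) \<le> u_pol \<and> u_pol \<le> 1 / (1 - \<gamma>)
      \<and> - (1 / (1 - \<gamma>)) \<le> u_st \<and> u_st \<le> 1 / (1 - \<gamma>))"
proof -
  define PK where "PK = emp_dist N smp"
  define Phat :: "'s \<times> 'a \<Rightarrow> 's \<Rightarrow> real" where "Phat = interp_kernel K lam PK"
  define Ptil :: "'s \<times> 'a \<Rightarrow> 's \<Rightarrow> real" where "Ptil = interp_kernel K lam (PK(j := P (s, a)))"
  define u_pol where "u_pol = \<gamma> * (\<Sum>s'\<in>UNIV. (PK j s' - P (s, a) s') * Vfun Phat r \<gamma> pol s')"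
  define u_st where "u_st = \<gamma> * (\<Sum>s'\<in>UNIV. (PK j s' - P (s, a) s') * Vfun Phat r \<gamma> pihat s')"
  define r_pol where "r_pol = (\<lambda>sa. r sa + u_pol * lam sa j)"
  define r_st where "r_st = (\<lambda>sa. r sa + u_st * lam sa j)"
  have g: "0 \<le> \<gamma>" "\<gamma> < 1" using gamma by auto
  have pih: "is_policy pihat" using pihat unfolding optimal_policy_def by blast
  have PK: "0 \<le> PK k s'" "(\<Sum>s'\<in>UNIV. PK k s') = 1" for k s'
    unfolding PK_def using emp_stoch[OF N_pos] by auto
  have Pn: "0 \<le> P sa s'" "(\<Sum>s'\<in>UNIV. P sa s') = 1" for sa s'
    using stoch_nn[OF P_stoch] stoch_sum[OF P_stoch] by auto
  have Phs: "stoch_kernel Phat" unfolding Phat_def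
    by (rule interp_stoch[OF _ _ lam_nonneg lam_sum]) (use PK in auto)
  have Pts: "stoch_kernel Ptil" unfolding Ptil_def
    by (rule interp_stoch[OF _ _ lam_nonneg lam_sum]) (use PK Pn in auto)
  have rel: "Phat sa s' = Ptil sa s' + lam sa j * (PK j s' - P (s, a) s')" for sa s'
  proof -
    have "Phat sa s' = lam sa j * PK j s' + (\<Sum>k\<in>{..<K} - {j}. lam sa k * PK k s')"
      unfolding Phat_def interp_kernel_def using sum.remove[of "{..<K}" j] j(1) by simp
    moreover have "Ptil sa s' = lam sa j * P (s, a) s' + (\<Sum>k\<in>{..<K} - {j}. lam sa k * (PK(j := P (s, a))) k s')"
      unfolding Ptil_def interp_kernel_def using sum.remove[of "{..<K}" j "\<lambda>k. lam sa k * (PK(j := P (s, a))) k s'"] j(1) by simp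
    moreover have "(\<Sum>k\<in>{..<K} - {j}. lam sa k * (PK(j := P (s, a))) k s') = (\<Sum>k\<in>{..<K} - {j}. lam sa k * PK k s')"
      by (rule sum.cong) auto
    ultimately show ?thesis by (simp add: algebra_simps)
  qed
  note sh_pol = shift[OF Phs Pts pol g rel u_pol_def]
  note sh_st = shift[OF Phs Pts pih g rel u_st_def]
  have e1: "Qfun Phat r \<gamma> pol = Qfun Ptil r_pol \<gamma> pol" using sh_pol(2) unfolding r_pol_def .
  have e2: "Qfun Phat r \<gamma> pihat = Qfun Ptil r_st \<gamma> pihat" using sh_st(2) unfolding r_st_def .
  let ?Qs = "Qfun Phat r \<gamma> pihat"
  have G: "Vof pol' ?Qs s0 \<le> Vof pihat ?Qs s0" if pol': "is_policy pol'" for pol' s0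
  proof (rule ccontr)
    assume nle: "\<not> Vof pol' ?Qs s0 \<le> Vof pihat ?Qs s0"
    define pol2 where "pol2 = (\<lambda>s. if s = s0 then pol' s else pihat s)"
    have p2: "is_policy pol2" using pol' pih unfolding is_policy_def pol2_def by auto
    have ge: "Vof pihat ?Qs x \<le> Vof pol2 ?Qs x" for x
      using nle unfolding pol2_def Vof_def by (cases "x = s0") auto
    have le: "?Qs x \<le> Qfun Phat r \<gamma> pol2 x" for x
    proof (rule cmp[OF Phs p2 g, where r=r])
      fix y
      have "step_op Phat \<gamma> pihat ?Qs y \<le> step_op Phat \<gamma> pol2 ?Qs y"
        unfolding step_op_def using g by (intro mult_left_mono ker_mono[OF Phs] ge) auto
      then show "?Qs y \<le> r y + step_op Phat \<gamma> pol2 ?Qs y"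
        using Qfun_fix[OF Phs pih g, of r y] by simp
      show "r y + step_op Phat \<gamma> pol2 (Qfun Phat r \<gamma> pol2) y \<le> Qfun Phat r \<gamma> pol2 y"
        using Qfun_fix[OF Phs p2 g, of r y] by simp
    qed
    have "Vof pol2 ?Qs s0 \<le> Vfun Phat r \<gamma> pol2 s0"
      unfolding Vfun_def by (rule Vof_mono[OF p2 le])
    moreover have "Vof pol2 ?Qs s0 = Vof pol' ?Qs s0" unfolding pol2_def Vof_def by simp
    moreover have "Vfun Phat r \<gamma> pol2 s0 \<le> Vfun Phat r \<gamma> pihat s0"
      using pihat p2 unfolding optimal_policy_def Phat_def PK_def by blast
    ultimately show False using nle unfolding Vfun_def by simp
  qed
  have dom: "Qfun Ptil r_st \<gamma> pol' x \<le> ?Qs x" if pol': "is_policy pol'" for pol' x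
  proof (rule cmp[OF Pts pol' g, where r=r_st])
    fix y
    show "Qfun Ptil r_st \<gamma> pol' y \<le> r_st y + step_op Ptil \<gamma> pol' (Qfun Ptil r_st \<gamma> pol') y"
      using Qfun_fix[OF Pts pol' g, of r_st y] by simp
    have "step_op Ptil \<gamma> pol' ?Qs y \<le> step_op Ptil \<gamma> pihat ?Qs y"
      unfolding step_op_def using g by (intro mult_left_mono ker_mono[OF Pts] G pol') auto
    then show "r_st y + step_op Ptil \<gamma> pol' ?Qs y \<le> ?Qs y"
      using sh_st(1)[of y] unfolding r_st_def by simp
  qed
  have e3: "Qfun Ptil r_st \<gamma> pihat = Qopt Ptil r_st \<gamma>"
  proof
    fix x
    show "Qfun Ptil r_st \<gamma> pihat x = Qopt Ptil r_st \<gamma> x"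
      unfolding Qopt_def
    proof (rule cSup_eq_maximum[symmetric])
      show "Qfun Ptil r_st \<gamma> pihat x \<in> (\<lambda>pol. Qfun Ptil r_st \<gamma> pol x) ` {pol. is_policy pol}"
        using pih by blast
      fix y assume "y \<in> (\<lambda>pol. Qfun Ptil r_st \<gamma> pol x) ` {pol. is_policy pol}"
      then obtain p where p: "is_policy p" "y = Qfun Ptil r_st \<gamma> p x" by blast
      show "y \<le> Qfun Ptil r_st \<gamma> pihat x" using dom[OF p(1), of x] e2 p(2) by simp
    qed
  qed
  have Vb: "0 \<le> Vfun Phat r \<gamma> p s'" "Vfun Phat r \<gamma> p s' \<le> 1 / (1 - \<gamma>)" if "is_policy p" for p s'
    unfolding Vfun_def using Q_bounds[OF Phs that g r_range]
    by (auto intro!: Vof_lb Vof_ub that)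
  have ub: "- (1 / (1 - \<gamma>)) \<le> u_pol" "u_pol \<le> 1 / (1 - \<gamma>)"
    unfolding u_pol_def by (rule u_bound[OF PK(1)[of j] PK(2)[of j] Pn(1)[of "(s, a)"] Pn(2)[of "(s, a)"] Vb(1)[OF pol] Vb(2)[OF pol] gamma refl])+
  have us: "- (1 / (1 - \<gamma>)) \<le> u_st" "u_st \<le> 1 / (1 - \<gamma>)"
    unfolding u_st_def by (rule u_bound[OF PK(1)[of j] PK(2)[of j] Pn(1)[of "(s, a)"] Pn(2)[of "(s, a)"] Vb(1)[OF pih] Vb(2)[OF pih] gamma refl])+
  show ?thesis
    unfolding Let_def PK_def[symmetric] Phat_def[symmetric] Ptil_def[symmetric]
      u_pol_def[symmetric] u_st_def[symmetric] r_pol_def[symmetric] r_st_def[symmetric]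
    using e1 e2 e3 ub us by blast
qed

end
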